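(* Let $\mathcal{B}$ be a $d$-dimensional manifold with a torsion-free flat connection $\nabla$ and $F\in C^\infty(\mathcal{B})$. Then $F$ satisfies Condition N at every point of $\mathcal{B}$ if and only if $F$ satisfies the Regular resonant set condition.
   Context: $\mathcal{K}_b=\ker dF_b$. Condition N at $b$: $X\in\mathcal{K}_b$ and $\nabla_X\nabla F=0$ at $b$ imply $X=0$. For a parallel vector field $X$ on an open set $\mathcal{O}\subset\mathcal{B}$, $\Omega_X=dF(X)\in C^\infty(\mathcal{O})$ and the resonant set is $\Sigma_X=\{c\in\mathcal{O}:\Omega_X(c)=0\}$. Regular resonant set condition: for every open set $\mathcal{O}\subset\mathcal{B}$, every non-vanishing parallel vector field $X$ on $\mathcal{O}$ and every point $b\in\Sigma_X$, one has $d(\Omega_X)_b\neq0$ (so that each $\Sigma_X$ is a codimension-one submanifold). *)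

theory Defs
  imports "HOL-Analysis.Analysis"
begin

fun Ck_on :: "nat \<Rightarrow> (real^('n::finite)) set \<Rightarrow> (real^'n \<Rightarrow> real) \<Rightarrow> bool" where
  "Ck_on 0 S f = continuous_on S f"
| "Ck_on (Suc k) S f = (f differentiable_on S \<and> continuous_on S f \<and>
      (\<forall>v. Ck_on k S (\<lambda>y. frechet_derivative f (at y) v)))"

definition smooth_on :: "(real^'n) set \<Rightarrow> (real^'n \<Rightarrow> real) \<Rightarrow> bool" where
  "smooth_on S f \<longleftrightarrow> (\<forall>k. Ck_on k S f)"

text \<open>A d-dimensional manifold with a torsion-free flat connection is modelled by an
  affine atlas: charts into real^'n (d = CARD('n)) whose transition maps are locally affine.
  The affine (flat, torsion-free) connection is the one whose Christoffel symbols
  vanish in these charts.\<close>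

type_synonym ('a,'n) chart = "'a set \<times> ('a \<Rightarrow> real^'n)"

definition affine_atlas :: "('a::topological_space, 'n::finite) chart set \<Rightarrow> bool" where
  "affine_atlas A \<longleftrightarrow>
     (\<forall>(U,\<phi>)\<in>A. open U \<and> open (\<phi> ` U) \<and> homeomorphism U (\<phi> ` U) \<phi> (inv_into U \<phi>)) \<and>
     (\<Union>(fst ` A) = UNIV) \<and>
     (\<forall>(U,\<phi>)\<in>A. \<forall>(V,\<psi>)\<in>A. \<forall>x\<in>U \<inter> V. \<exists>W L c. open W \<and> x \<in> W \<and> linear L \<and> bij L \<and>
         (\<forall>y\<in>W \<inter> U \<inter> V. \<psi> y = L (\<phi> y) + c))"

definition loc :: "('a, 'n::finite) chart \<Rightarrow> ('a \<Rightarrow> real) \<Rightarrow> real^'n \<Rightarrow> real" where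
  "loc c F = F \<circ> inv_into (fst c) (snd c)"

definition smooth_fun :: "('a::topological_space, 'n::finite) chart set \<Rightarrow> ('a \<Rightarrow> real) \<Rightarrow> bool" where
  "smooth_fun A F \<longleftrightarrow> (\<forall>c\<in>A. smooth_on (snd c ` fst c) (loc c F))"

text \<open>First and second derivative in coordinates: dF(X) and (nabla_X nabla F)(V);
  in affine coordinates the connection has vanishing Christoffel symbols.\<close>
definition D1 :: "(real^'n \<Rightarrow> real) \<Rightarrow> real^'n \<Rightarrow> real^'n \<Rightarrow> real" where
  "D1 f y \<xi> = frechet_derivative f (at y) \<xi>"

definition D2 :: "(real^'n \<Rightarrow> real) \<Rightarrow> real^'n \<Rightarrow> real^'n \<Rightarrow> real^'n \<Rightarrow> real" where
  "D2 f y \<xi> v = frechet_derivative (\<lambda>z. D1 f z \<xi>) (at y) v"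

definition condition_N :: "('a::topological_space, 'n::finite) chart set \<Rightarrow> ('a \<Rightarrow> real) \<Rightarrow> 'a \<Rightarrow> bool" where
  "condition_N A F b \<longleftrightarrow>
     (\<forall>c\<in>A. b \<in> fst c \<longrightarrow>
        (\<forall>\<xi>. D1 (loc c F) (snd c b) \<xi> = 0 \<and> (\<forall>v. D2 (loc c F) (snd c b) \<xi> v = 0) \<longrightarrow> \<xi> = 0))"

text \<open>A vector field on Ob is given by its components X c x in each chart c
  (for x in Ob and in the chart domain), compatible under chart changes.\<close>
definition vector_field_on :: "('a::topological_space, 'n::finite) chart set \<Rightarrow> 'a set \<Rightarrow>
    (('a,'n) chart \<Rightarrow> 'a \<Rightarrow> real^'n) \<Rightarrow> bool" where
  "vector_field_on A Ob X \<longleftrightarrow>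
     (\<forall>c1\<in>A. \<forall>c2\<in>A. \<forall>x\<in>Ob \<inter> fst c1 \<inter> fst c2.
        X c2 x = frechet_derivative (snd c2 \<circ> inv_into (fst c1) (snd c1)) (at (snd c1 x)) (X c1 x))"

definition parallel_on :: "('a::topological_space, 'n::finite) chart set \<Rightarrow> 'a set \<Rightarrow>
    (('a,'n) chart \<Rightarrow> 'a \<Rightarrow> real^'n) \<Rightarrow> bool" where
  "parallel_on A Ob X \<longleftrightarrow> vector_field_on A Ob X \<and>
     (\<forall>c\<in>A. \<forall>x\<in>Ob \<inter> fst c. \<exists>W. open W \<and> x \<in> W \<and> (\<forall>y\<in>W \<inter> Ob \<inter> fst c. X c y = X c x))"

definition nonvanishing_on :: "('a, 'n::finite) chart set \<Rightarrow> 'a set \<Rightarrow>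
    (('a,'n) chart \<Rightarrow> 'a \<Rightarrow> real^'n) \<Rightarrow> bool" where
  "nonvanishing_on A Ob X \<longleftrightarrow> (\<forall>c\<in>A. \<forall>x\<in>Ob \<inter> fst c. X c x \<noteq> 0)"

text \<open>Omega_X = dF(X), computed in a chart containing the point (independent of the choice).\<close>
definition Omega :: "('a, 'n::finite) chart set \<Rightarrow> ('a \<Rightarrow> real) \<Rightarrow>
    (('a,'n) chart \<Rightarrow> 'a \<Rightarrow> real^'n) \<Rightarrow> 'a \<Rightarrow> real" where
  "Omega A F X x = (let c = (SOME c. c \<in> A \<and> x \<in> fst c) in D1 (loc c F) (snd c x) (X c x))"

definition resonant_set :: "('a, 'n::finite) chart set \<Rightarrow> ('a \<Rightarrow> real) \<Rightarrow> 'a set \<Rightarrow>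
    (('a,'n) chart \<Rightarrow> 'a \<Rightarrow> real^'n) \<Rightarrow> 'a set" where
  "resonant_set A F Ob X = {c\<in>Ob. Omega A F X c = 0}"

definition regular_resonant :: "('a::topological_space, 'n::finite) chart set \<Rightarrow> ('a \<Rightarrow> real) \<Rightarrow> bool" where
  "regular_resonant A F \<longleftrightarrow>
     (\<forall>Ob X. open Ob \<longrightarrow> parallel_on A Ob X \<longrightarrow> nonvanishing_on A Ob X \<longrightarrow>
        (\<forall>b\<in>resonant_set A F Ob X. \<forall>c\<in>A. b \<in> fst c \<longrightarrow>
           frechet_derivative (loc c (Omega A F X)) (at (snd c b)) \<noteq> (\<lambda>_. 0)))"

end

theory Submission
  imports Defs
begin

lemma chart_props:
  assumes "affine_atlas A" "c \<in> A"
  shows "open (fst c)" "open (snd c ` fst c)"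
    "\<And>x. x \<in> fst c \<Longrightarrow> inv_into (fst c) (snd c) (snd c x) = x"
    "\<And>z. z \<in> snd c ` fst c \<Longrightarrow> snd c (inv_into (fst c) (snd c) z) = z"
    "\<And>z. z \<in> snd c ` fst c \<Longrightarrow> inv_into (fst c) (snd c) z \<in> fst c"
    "homeomorphism (fst c) (snd c ` fst c) (snd c) (inv_into (fst c) (snd c))"
proof -
  obtain U \<phi> where c: "c = (U, \<phi>)" by fastforce
  have h: "open U" "open (\<phi> ` U)" "homeomorphism U (\<phi> ` U) \<phi> (inv_into U \<phi>)"
    using assms unfolding affine_atlas_def c by auto
  then show "open (fst c)" "open (snd c ` fst c)"
    "homeomorphism (fst c) (snd c ` fst c) (snd c) (inv_into (fst c) (snd c))"
    by (auto simp: c)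
  show "\<And>x. x \<in> fst c \<Longrightarrow> inv_into (fst c) (snd c) (snd c x) = x"
    "\<And>z. z \<in> snd c ` fst c \<Longrightarrow> snd c (inv_into (fst c) (snd c) z) = z"
    "\<And>z. z \<in> snd c ` fst c \<Longrightarrow> inv_into (fst c) (snd c) z \<in> fst c"
    using h(3) unfolding homeomorphism_def c by auto
qed

lemma chart_open_image:
  assumes "affine_atlas A" "c \<in> A" "open V" "V \<subseteq> fst c"
  shows "open (snd c ` V)"
proof -
  have "openin (top_of_set (snd c ` fst c)) (snd c ` V)"
    by (rule homeomorphism_imp_open_map[OF chart_props(6)[OF assms(1,2)]])
       (metis assms(3,4) inf.absorb_iff2 openin_open_Int)
  then show ?thesis using chart_props(2)[OF assms(1,2)] openin_open_trans by blast
qed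

lemma cover: "affine_atlas A \<Longrightarrow> \<exists>c. c \<in> A \<and> x \<in> fst c"
proof -
  assume "affine_atlas A"
  then have "x \<in> \<Union>(fst ` A)" unfolding affine_atlas_def by simp
  then show ?thesis by blast
qed

lemma trans_aff:
  assumes "affine_atlas A" "c1 \<in> A" "c2 \<in> A" "x \<in> fst c1 \<inter> fst c2"
  shows "\<exists>W L k. open W \<and> x \<in> W \<and> linear L \<and> bij L \<and>
     (\<forall>y\<in>W \<inter> fst c1 \<inter> fst c2. snd c2 y = L (snd c1 y) + k)"
proof -
  obtain U \<phi> where c1: "c1 = (U, \<phi>)" by fastforce
  obtain V \<psi> where c2: "c2 = (V, \<psi>)" by fastforce
  have H: "\<forall>(U,\<phi>)\<in>A. \<forall>(V,\<psi>)\<in>A. \<forall>x\<in>U \<inter> V. \<exists>W L c. open W \<and> x \<in> W \<and> linear L \<and> bij L \<and>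
         (\<forall>y\<in>W \<inter> U \<inter> V. \<psi> y = L (\<phi> y) + c)"
    by (rule conjunct2[OF conjunct2[OF assms(1)[unfolded affine_atlas_def]]])
  have H1: "\<forall>(V,\<psi>)\<in>A. \<forall>x\<in>U \<inter> V. \<exists>W L c. open W \<and> x \<in> W \<and> linear L \<and> bij L \<and>
         (\<forall>y\<in>W \<inter> U \<inter> V. \<psi> y = L (\<phi> y) + c)"
    using bspec[OF H assms(2)] unfolding c1 by simp
  have H2: "\<forall>x\<in>U \<inter> V. \<exists>W L c. open W \<and> x \<in> W \<and> linear L \<and> bij L \<and>
         (\<forall>y\<in>W \<inter> U \<inter> V. \<psi> y = L (\<phi> y) + c)"
    using bspec[OF H1 assms(3)] unfolding c2 by simp
  show ?thesis using bspec[OF H2] assms(4) unfolding c1 c2 by simp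
qed

lemma T_deriv:
  assumes "affine_atlas A" "c1 \<in> A" "c2 \<in> A" "x \<in> fst c1 \<inter> fst c2"
  shows "\<exists>W L. open W \<and> x \<in> W \<and> linear L \<and> bij L \<and>
     (\<forall>y\<in>W \<inter> fst c1 \<inter> fst c2.
        ((snd c2 \<circ> inv_into (fst c1) (snd c1)) has_derivative L) (at (snd c1 y)))"
proof -
  obtain W L k where W: "open W" "x \<in> W" "linear L" "bij L"
    "\<forall>y\<in>W \<inter> fst c1 \<inter> fst c2. snd c2 y = L (snd c1 y) + k"
    using trans_aff[OF assms] by blast
  let ?S = "snd c1 ` (W \<inter> fst c1 \<inter> fst c2)"
  have oS: "open ?S"
  proof (rule chart_open_image[OF assms(1,2)])
    show "open (W \<inter> fst c1 \<inter> fst c2)"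
      using W(1) chart_props(1)[OF assms(1,2)] chart_props(1)[OF assms(1,3)] by blast
  qed blast
  have bl: "bounded_linear L" using W(3) linear_conv_bounded_linear by blast
  have "((snd c2 \<circ> inv_into (fst c1) (snd c1)) has_derivative L) (at (snd c1 y))"
    if y: "y \<in> W \<inter> fst c1 \<inter> fst c2" for y
  proof -
    have d: "((\<lambda>z. L z + k) has_derivative L) (at (snd c1 y))"
      using has_derivative_add_const[OF bounded_linear_imp_has_derivative[OF bl]] .
    show ?thesis
    proof (rule has_derivative_transform_within_open[OF d oS])
      show "snd c1 y \<in> ?S" using y by blast
      fix z assume "z \<in> ?S"
      then obtain w where w: "w \<in> W \<inter> fst c1 \<inter> fst c2" "z = snd c1 w" by blast
      then have "inv_into (fst c1) (snd c1) z = w" using chart_props(3)[OF assms(1,2)] by auto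
      then show "L z + k = (snd c2 \<circ> inv_into (fst c1) (snd c1)) z"
        using W(5) w(1) unfolding w(2) o_def by simp
    qed
  qed
  then show ?thesis using W by blast
qed

lemma loc_diff:
  assumes "affine_atlas A" "smooth_fun A F" "c \<in> A" "x \<in> fst c"
  shows "loc c F differentiable at (snd c x)"
    "(\<lambda>z. D1 (loc c F) z \<xi>) differentiable at (snd c x)"
proof -
  have sm: "\<forall>k. Ck_on k (snd c ` fst c) (loc c F)"
    using assms(2,3) unfolding smooth_fun_def smooth_on_def by blast
  have o: "open (snd c ` fst c)" using chart_props(2)[OF assms(1,3)] .
  have xs: "snd c x \<in> snd c ` fst c" using assms(4) by blast
  from sm[rule_format, of 1] have "loc c F differentiable_on (snd c ` fst c)" by simp
  then show "loc c F differentiable at (snd c x)"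
    using differentiable_on_eq_differentiable_at[OF o] xs by blast
  from sm[rule_format, of 2] have "Ck_on 1 (snd c ` fst c) (\<lambda>y. frechet_derivative (loc c F) (at y) \<xi>)"
    by (simp add: numeral_2_eq_2)
  then have "(\<lambda>z. D1 (loc c F) z \<xi>) differentiable_on (snd c ` fst c)"
    by (simp add: D1_def)
  then show "(\<lambda>z. D1 (loc c F) z \<xi>) differentiable at (snd c x)"
    using differentiable_on_eq_differentiable_at[OF o] xs by blast
qed

lemma T_at:
  assumes "affine_atlas A" "c1 \<in> A" "x \<in> fst c1"
  shows "(snd c2 \<circ> inv_into (fst c1) (snd c1)) (snd c1 x) = snd c2 x"
  using chart_props(3)[OF assms] by simp

lemma invariance:
  assumes at: "affine_atlas A" and sm: "smooth_fun A F" and vf: "vector_field_on A Ob X"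
    and c1: "c1 \<in> A" and c2: "c2 \<in> A" and x: "x \<in> Ob \<inter> fst c1 \<inter> fst c2"
  shows "D1 (loc c1 F) (snd c1 x) (X c1 x) = D1 (loc c2 F) (snd c2 x) (X c2 x)"
proof -
  let ?T = "snd c2 \<circ> inv_into (fst c1) (snd c1)"
  obtain W L where WL: "open W" "x \<in> W" "linear L"
     "\<forall>y\<in>W \<inter> fst c1 \<inter> fst c2. (?T has_derivative L) (at (snd c1 y))"
    using T_deriv[OF at c1 c2, of x] x by blast
  have dT: "(?T has_derivative L) (at (snd c1 x))" using WL x by blast
  have L: "L = frechet_derivative ?T (at (snd c1 x))" using frechet_derivative_at[OF dT] .
  let ?D = "frechet_derivative (loc c2 F) (at (snd c2 x))"
  have d2: "(loc c2 F has_derivative ?D) (at (?T (snd c1 x)))"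
    using loc_diff(1)[OF at sm c2, of x] x T_at[OF at c1, of x c2] frechet_derivative_works by auto
  have ch: "((loc c2 F \<circ> ?T) has_derivative (?D \<circ> L)) (at (snd c1 x))"
    by (rule diff_chain_at[OF dT d2])
  let ?S = "snd c1 ` (fst c1 \<inter> fst c2)"
  have oS: "open ?S"
    by (rule chart_open_image[OF at c1])
       (use chart_props(1)[OF at c1] chart_props(1)[OF at c2] in blast)+
  have d1: "(loc c1 F has_derivative (?D \<circ> L)) (at (snd c1 x))"
  proof (rule has_derivative_transform_within_open[OF ch oS])
    show "snd c1 x \<in> ?S" using x by blast
    fix z assume "z \<in> ?S"
    then obtain w where w: "w \<in> fst c1 \<inter> fst c2" "z = snd c1 w" by blast
    then have i1: "inv_into (fst c1) (snd c1) z = w" using chart_props(3)[OF at c1] by auto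
    have i2: "inv_into (fst c2) (snd c2) (snd c2 w) = w" using chart_props(3)[OF at c2] w by auto
    show "(loc c2 F \<circ> ?T) z = loc c1 F z"
      unfolding loc_def o_def i1 i2 by simp
  qed
  have "X c2 x = L (X c1 x)" using vf c1 c2 x unfolding vector_field_on_def L by blast
  then show ?thesis unfolding D1_def frechet_derivative_at[OF d1, symmetric] by simp
qed

lemma Omega_eq:
  assumes at: "affine_atlas A" and sm: "smooth_fun A F" and vf: "vector_field_on A Ob X"
    and c: "c \<in> A" and x: "x \<in> Ob \<inter> fst c"
  shows "Omega A F X x = D1 (loc c F) (snd c x) (X c x)"
proof -
  define c' where "c' = (SOME c. c \<in> A \<and> x \<in> fst c)"
  have c': "c' \<in> A \<and> x \<in> fst c'" unfolding c'_def using cover[OF at, of x] by (rule someI_ex)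
  have "Omega A F X x = D1 (loc c' F) (snd c' x) (X c' x)"
    unfolding Omega_def c'_def[symmetric] Let_def ..
  also have "\<dots> = D1 (loc c F) (snd c x) (X c x)"
    using invariance[OF at sm vf, of c' c x] c' c x by blast
  finally show ?thesis .
qed

lemma key:
  assumes at: "affine_atlas A" and sm: "smooth_fun A F" and vf: "vector_field_on A Ob X"
    and oOb: "open Ob" and c: "c \<in> A" and b: "b \<in> Ob \<inter> fst c"
    and W: "open W" "b \<in> W" "\<forall>y\<in>W \<inter> Ob \<inter> fst c. X c y = \<xi>"
  shows "(loc c (Omega A F X) has_derivative (\<lambda>v. D2 (loc c F) (snd c b) \<xi> v)) (at (snd c b))"
proof -
  let ?g = "\<lambda>z. D1 (loc c F) z \<xi>"
  have "(?g has_derivative frechet_derivative ?g (at (snd c b))) (at (snd c b))"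
    using loc_diff(2)[OF at sm c, of b \<xi>] b frechet_derivative_works by auto
  then have dg: "(?g has_derivative (\<lambda>v. D2 (loc c F) (snd c b) \<xi> v)) (at (snd c b))"
    unfolding D2_def by simp
  let ?S = "snd c ` (W \<inter> Ob \<inter> fst c)"
  have oS: "open ?S"
    by (rule chart_open_image[OF at c])
       (use chart_props(1)[OF at c] oOb W(1) in blast)+
  show ?thesis
  proof (rule has_derivative_transform_within_open[OF dg oS])
    show "snd c b \<in> ?S" using b W by blast
    fix z assume "z \<in> ?S"
    then obtain y where y: "y \<in> W \<inter> Ob \<inter> fst c" "z = snd c y" by blast
    then have i: "inv_into (fst c) (snd c) z = y" using chart_props(3)[OF at c] by auto
    have "loc c (Omega A F X) z = Omega A F X y" unfolding loc_def o_def i ..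
    also have "\<dots> = D1 (loc c F) z (X c y)"
      using Omega_eq[OF at sm vf c, of y] y by simp
    also have "\<dots> = D1 (loc c F) z \<xi>" using W(3) y by simp
    finally show "?g z = loc c (Omega A F X) z" by simp
  qed
qed

theorem mainTheorem4:
  fixes A :: "('a::{t2_space, second_countable_topology}, 'n::finite) chart set"
    and F :: "'a \<Rightarrow> real"
  assumes "affine_atlas A"
    and "smooth_fun A F"
  shows "(\<forall>b. condition_N A F b) \<longleftrightarrow> regular_resonant A F"
proof
  note at = assms(1) and sm = assms(2)
  assume N: "\<forall>b. condition_N A F b"
  show "regular_resonant A F"
    unfolding regular_resonant_def
  proof (intro allI impI ballI)
    fix Ob X b c
    assume oOb: "open Ob" and par: "parallel_on A Ob X" and nv: "nonvanishing_on A Ob X"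
      and bR: "b \<in> resonant_set A F Ob X" and c: "c \<in> A" and bc: "b \<in> fst c"
    have vf: "vector_field_on A Ob X" using par unfolding parallel_on_def by blast
    have bOb: "b \<in> Ob" and Om0: "Omega A F X b = 0" using bR unfolding resonant_set_def by auto
    obtain W where W: "open W" "b \<in> W" "\<forall>y\<in>W \<inter> Ob \<inter> fst c. X c y = X c b"
      using par c bOb bc unfolding parallel_on_def by blast
    have d: "(loc c (Omega A F X) has_derivative (\<lambda>v. D2 (loc c F) (snd c b) (X c b) v)) (at (snd c b))"
      by (rule key[OF at sm vf oOb c _ W]) (use bOb bc in blast)
    show "frechet_derivative (loc c (Omega A F X)) (at (snd c b)) \<noteq> (\<lambda>_. 0)"
    proof
      assume z: "frechet_derivative (loc c (Omega A F X)) (at (snd c b)) = (\<lambda>_. 0)"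
      have h2: "\<forall>v. D2 (loc c F) (snd c b) (X c b) v = 0"
        using z[folded frechet_derivative_at[OF d]] by metis
      have h1: "D1 (loc c F) (snd c b) (X c b) = 0"
        using Omega_eq[OF at sm vf c, of b] bOb bc Om0 by simp
      have "X c b = 0" using N h1 h2 c bc unfolding condition_N_def by blast
      moreover have "X c b \<noteq> 0" using nv c bOb bc unfolding nonvanishing_on_def by blast
      ultimately show False by blast
    qed
  qed
next
  note at = assms(1) and sm = assms(2)
  assume RR: "regular_resonant A F"
  show "\<forall>b. condition_N A F b"
    unfolding condition_N_def
  proof (intro allI ballI impI)
    fix b c0 \<xi>
    assume c0: "c0 \<in> A" and bc: "b \<in> fst c0"
      and h: "D1 (loc c0 F) (snd c0 b) \<xi> = 0 \<and> (\<forall>v. D2 (loc c0 F) (snd c0 b) \<xi> v = 0)"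
    show "\<xi> = 0"
    proof (rule ccontr)
      assume xi: "\<xi> \<noteq> 0"
      define Ob where "Ob = fst c0"
      define X :: "('a,'n) chart \<Rightarrow> 'a \<Rightarrow> real^'n" where "X = (\<lambda>c y. frechet_derivative (snd c \<circ> inv_into (fst c0) (snd c0)) (at (snd c0 y)) \<xi>)"
      have oOb: "open Ob" unfolding Ob_def using chart_props(1)[OF at c0] .
      have derL: "\<exists>W L. open W \<and> x \<in> W \<and> linear L \<and> bij L \<and>
          (\<forall>y\<in>W \<inter> Ob \<inter> fst c. X c y = L \<xi>)" if c: "c \<in> A" and x: "x \<in> Ob \<inter> fst c" for c x
      proof -
        obtain W L where WL: "open W" "x \<in> W" "linear L" "bij L"
          "\<forall>y\<in>W \<inter> fst c0 \<inter> fst c. ((snd c \<circ> inv_into (fst c0) (snd c0)) has_derivative L) (at (snd c0 y))"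
          using T_deriv[OF at c0 c, of x] x unfolding Ob_def by blast
        have "\<forall>y\<in>W \<inter> Ob \<inter> fst c. X c y = L \<xi>"
          using WL(5) frechet_derivative_at unfolding X_def Ob_def by metis
        then show ?thesis using WL by blast
      qed
      have vf: "vector_field_on A Ob X"
        unfolding vector_field_on_def
      proof (intro ballI)
        fix c1 c2 x
        assume c1: "c1 \<in> A" and c2: "c2 \<in> A" and x: "x \<in> Ob \<inter> fst c1 \<inter> fst c2"
        let ?T01 = "snd c1 \<circ> inv_into (fst c0) (snd c0)"
        let ?T02 = "snd c2 \<circ> inv_into (fst c0) (snd c0)"
        let ?T12 = "snd c2 \<circ> inv_into (fst c1) (snd c1)"
        obtain W1 L1 where W1: "open W1" "x \<in> W1"
          "\<forall>y\<in>W1 \<inter> fst c0 \<inter> fst c1. (?T01 has_derivative L1) (at (snd c0 y))"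
          using T_deriv[OF at c0 c1, of x] x unfolding Ob_def by blast
        obtain W2 L2 where W2: "open W2" "x \<in> W2"
          "\<forall>y\<in>W2 \<inter> fst c0 \<inter> fst c2. (?T02 has_derivative L2) (at (snd c0 y))"
          using T_deriv[OF at c0 c2, of x] x unfolding Ob_def by blast
        obtain W3 L3 where W3: "open W3" "x \<in> W3"
          "\<forall>y\<in>W3 \<inter> fst c1 \<inter> fst c2. (?T12 has_derivative L3) (at (snd c1 y))"
          using T_deriv[OF at c1 c2, of x] x by blast
        have d1: "(?T01 has_derivative L1) (at (snd c0 x))" using W1 x unfolding Ob_def by blast
        have d2: "(?T02 has_derivative L2) (at (snd c0 x))" using W2 x unfolding Ob_def by blast
        have d3: "(?T12 has_derivative L3) (at (?T01 (snd c0 x)))"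
          using W3 x T_at[OF at c0, of x c1] unfolding Ob_def by auto
        have ch: "((?T12 \<circ> ?T01) has_derivative (L3 \<circ> L1)) (at (snd c0 x))"
          by (rule diff_chain_at[OF d1 d3])
        let ?S = "snd c0 ` (fst c0 \<inter> fst c1 \<inter> fst c2)"
        have oS: "open ?S"
          by (rule chart_open_image[OF at c0])
             (use chart_props(1)[OF at c0] chart_props(1)[OF at c1] chart_props(1)[OF at c2] in blast)+
        have d2': "(?T02 has_derivative (L3 \<circ> L1)) (at (snd c0 x))"
        proof (rule has_derivative_transform_within_open[OF ch oS])
          show "snd c0 x \<in> ?S" using x unfolding Ob_def by blast
          fix z assume "z \<in> ?S"
          then obtain w where w: "w \<in> fst c0 \<inter> fst c1 \<inter> fst c2" "z = snd c0 w" by blast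
          then have i0: "inv_into (fst c0) (snd c0) z = w" using chart_props(3)[OF at c0] by auto
          have i1: "inv_into (fst c1) (snd c1) (snd c1 w) = w" using chart_props(3)[OF at c1] w by auto
          show "(?T12 \<circ> ?T01) z = ?T02 z" unfolding o_def i0 i1 by simp
        qed
        have "L2 = L3 \<circ> L1" using frechet_derivative_at[OF d2] frechet_derivative_at[OF d2'] by simp
        moreover have "X c1 x = L1 \<xi>" "X c2 x = L2 \<xi>"
          unfolding X_def using frechet_derivative_at[OF d1] frechet_derivative_at[OF d2] by simp_all
        moreover have "frechet_derivative ?T12 (at (snd c1 x)) = L3"
          using frechet_derivative_at[OF d3] T_at[OF at c0, of x c1] x unfolding Ob_def by simp
        ultimately show "X c2 x = frechet_derivative ?T12 (at (snd c1 x)) (X c1 x)" by simp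
      qed
      have par: "parallel_on A Ob X"
        unfolding parallel_on_def
      proof (intro conjI vf ballI)
        fix c x assume c: "c \<in> A" and x: "x \<in> Ob \<inter> fst c"
        obtain W L where WL: "open W" "x \<in> W" "\<forall>y\<in>W \<inter> Ob \<inter> fst c. X c y = L \<xi>"
          using derL[OF c x] by blast
        show "\<exists>W. open W \<and> x \<in> W \<and> (\<forall>y\<in>W \<inter> Ob \<inter> fst c. X c y = X c x)"
        proof (intro exI conjI ballI)
          have "X c x = L \<xi>" using WL(2,3) x by blast
          then show "X c y = X c x" if "y \<in> W \<inter> Ob \<inter> fst c" for y using WL(3) that by simp
        qed (use WL in auto)
      qed
      have nv: "nonvanishing_on A Ob X"
        unfolding nonvanishing_on_def
      proof (intro ballI)
        fix c x assume c: "c \<in> A" and x: "x \<in> Ob \<inter> fst c"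
        obtain W L where WL: "open W" "x \<in> W" "linear L" "bij L" "\<forall>y\<in>W \<inter> Ob \<inter> fst c. X c y = L \<xi>"
          using derL[OF c x] by blast
        have "X c x = L \<xi>" using WL x by blast
        moreover have "L \<xi> \<noteq> 0"
        proof
          assume "L \<xi> = 0"
          then have "L \<xi> = L 0" using linear_0[OF WL(3)] by simp
          then show False using xi WL(4) unfolding bij_def inj_def by blast
        qed
        ultimately show "X c x \<noteq> 0" by simp
      qed
      have X0: "X c0 y = \<xi>" if y: "y \<in> Ob" for y
      proof -
        have "((\<lambda>z. z) has_derivative (\<lambda>z. z)) (at (snd c0 y))" by (rule has_derivative_ident)
        then have "((snd c0 \<circ> inv_into (fst c0) (snd c0)) has_derivative (\<lambda>z. z)) (at (snd c0 y))"
        proof (rule has_derivative_transform_within_open[OF _ chart_props(2)[OF at c0]])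
          show "snd c0 y \<in> snd c0 ` fst c0" using y unfolding Ob_def by blast
          fix z assume "z \<in> snd c0 ` fst c0"
          then show "z = (snd c0 \<circ> inv_into (fst c0) (snd c0)) z"
            using chart_props(4)[OF at c0] by simp
        qed
        then show ?thesis unfolding X_def using frechet_derivative_at by metis
      qed
      have bOb: "b \<in> Ob" unfolding Ob_def using bc .
      have "Omega A F X b = D1 (loc c0 F) (snd c0 b) (X c0 b)"
        using Omega_eq[OF at sm vf c0, of b] bOb bc by simp
      then have bR: "b \<in> resonant_set A F Ob X"
        unfolding resonant_set_def using h X0[OF bOb] bOb by simp
      have ne: "frechet_derivative (loc c0 (Omega A F X)) (at (snd c0 b)) \<noteq> (\<lambda>_. 0)"
        using RR oOb par nv bR c0 bc unfolding regular_resonant_def by blast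
      have d: "(loc c0 (Omega A F X) has_derivative (\<lambda>v. D2 (loc c0 F) (snd c0 b) \<xi> v)) (at (snd c0 b))"
        by (rule key[OF at sm vf oOb c0, of b UNIV]) (use bOb bc X0 in auto)
      have "frechet_derivative (loc c0 (Omega A F X)) (at (snd c0 b)) = (\<lambda>_. 0)"
        using frechet_derivative_at[OF d, symmetric] h by simp
      then show False using ne by blast
    qed
  qed
qed

end
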